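(* Let $\mathsf A_1,\dots,\mathsf A_n$ be quantum observables on a finite-dimensional Hilbert space with finite outcome sets, and for each $j$ let $\widetilde{\mathsf A}_j(x')=\sum_x\nu_j(x',x)\mathsf A_j(x)$ for some stochastic matrix $\nu_j$ (a post-processing of $\mathsf A_j$). Let $\mathcal S_0$ be a set of states. If $\widetilde{\mathsf A}_1,\dots,\widetilde{\mathsf A}_n$ are $\mathcal S_0$-incompatible, then $\mathsf A_1,\dots,\mathsf A_n$ are $\mathcal S_0$-incompatible, and $$\chi_{incomp}(\widetilde{\mathsf A}_1,\dots,\widetilde{\mathsf A}_n)\ge\chi_{incomp}(\mathsf A_1,\dots,\mathsf A_n),\qquad\chi_{comp}(\widetilde{\mathsf A}_1,\dots,\widetilde{\mathsf A}_n)\ge\chi_{comp}(\mathsf A_1,\dots,\mathsf A_n).$$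
   Context: $\mathcal S$ denotes the set of density operators on a $d$-dimensional Hilbert space. An observable with finite outcome set $X$ is a POVM $x\mapsto\mathsf A(x)$. A stochastic matrix $\nu$ satisfies $\nu(x',x)\ge0$ and $\sum_{x'}\nu(x',x)=1$. Observables $\mathsf A_1,\dots,\mathsf A_n$ (outcome sets $X_1,\dots,X_n$) are compatible if there is an observable $\mathsf G$ on $X_1\times\dots\times X_n$ whose marginals ($\mathsf A_j(x_j)=\sum_{x_l,l\ne j}\mathsf G(x_1,\dots,x_n)$) are the $\mathsf A_j$; otherwise incompatible. For $\mathcal S_0\subset\mathcal S$, they are $\mathcal S_0$-compatible if there exist compatible observables $\mathsf A'_1,\dots,\mathsf A'_n$ (same outcome sets) with $\mathrm{Tr}[\varrho\mathsf A'_j(x)]=\mathrm{Tr}[\varrho\mathsf A_j(x)]$ for all $j,x$ and $\varrho\in\mathcal S_0$; otherwise $\mathcal S_0$-incompatible. For incompatible observables, $\chi_{incomp}=\min\{\dim\mathrm{aff}\mathcal S_0+1:\mathcal S_0\subset\mathcal S,\ \mathcal S_0\text{-incompatible}\}$ and $\chi_{comp}=\max\{\dim\mathrm{aff}\mathcal S_0+1:\mathcal S_0\subset\mathcal S,\ \mathcal S_0\text{-compatible}\}$. *)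

theory Defs
  imports "HOL-Analysis.Analysis"
begin

text \<open>Operators on a d-dimensional Hilbert space are d x d complex matrices,
  with the dimension given by a finite index type 'd.\<close>

type_synonym 'd cmat = "complex ^ 'd ^ 'd"

definition mtrace :: "'d::finite cmat \<Rightarrow> complex" where
  "mtrace A = (\<Sum>i\<in>UNIV. A $ i $ i)"

definition quad_form :: "'d::finite cmat \<Rightarrow> complex ^ 'd \<Rightarrow> complex" where
  "quad_form A v = (\<Sum>i\<in>UNIV. cnj (v $ i) * (A *v v) $ i)"

text \<open>Positive semidefinite: the quadratic form is real and nonnegative
  (over the complex numbers this implies self-adjointness).\<close>
definition psd :: "'d::finite cmat \<Rightarrow> bool" where
  "psd A \<longleftrightarrow> (\<forall>v. Im (quad_form A v) = 0 \<and> 0 \<le> Re (quad_form A v))"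

definition density_ops :: "'d::finite cmat set" where
  "density_ops = {\<rho>. psd \<rho> \<and> mtrace \<rho> = 1}"

definition povm :: "'x set \<Rightarrow> ('x \<Rightarrow> 'd::finite cmat) \<Rightarrow> bool" where
  "povm X A \<longleftrightarrow> finite X \<and> (\<forall>x\<in>X. psd (A x)) \<and> (\<Sum>x\<in>X. A x) = mat 1"

text \<open>Observables A 0, ..., A (n-1) with outcome sets X 0, ..., X (n-1).
  Outcomes of the joint observable are tuples g with g j \<in> X j for j < n.\<close>
definition compatible ::
  "nat \<Rightarrow> (nat \<Rightarrow> 'x set) \<Rightarrow> (nat \<Rightarrow> 'x \<Rightarrow> 'd::finite cmat) \<Rightarrow> bool" where
  "compatible n X A \<longleftrightarrow>
     (\<exists>G. povm (PiE {..<n} X) G \<and>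
          (\<forall>j<n. \<forall>x\<in>X j. A j x = (\<Sum>g\<in>{g\<in>PiE {..<n} X. g j = x}. G g)))"

definition S0_compatible ::
  "'d::finite cmat set \<Rightarrow> nat \<Rightarrow> (nat \<Rightarrow> 'x set) \<Rightarrow> (nat \<Rightarrow> 'x \<Rightarrow> 'd cmat) \<Rightarrow> bool" where
  "S0_compatible S0 n X A \<longleftrightarrow>
     (\<exists>A'. (\<forall>j<n. povm (X j) (A' j)) \<and> compatible n X A' \<and>
           (\<forall>j<n. \<forall>x\<in>X j. \<forall>\<rho>\<in>S0. mtrace (\<rho> ** A' j x) = mtrace (\<rho> ** A j x)))"

abbreviation S0_incompatible ::
  "'d::finite cmat set \<Rightarrow> nat \<Rightarrow> (nat \<Rightarrow> 'x set) \<Rightarrow> (nat \<Rightarrow> 'x \<Rightarrow> 'd cmat) \<Rightarrow> bool" where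
  "S0_incompatible S0 n X A \<equiv> \<not> S0_compatible S0 n X A"

text \<open>dim aff S0 is the (real) affine dimension; aff_dim {} = -1.\<close>
definition chi_incomp ::
  "nat \<Rightarrow> (nat \<Rightarrow> 'x set) \<Rightarrow> (nat \<Rightarrow> 'x \<Rightarrow> 'd::finite cmat) \<Rightarrow> int" where
  "chi_incomp n X A =
     Min {aff_dim S0 + 1 | S0. S0 \<subseteq> density_ops \<and> S0_incompatible S0 n X A}"

definition chi_comp ::
  "nat \<Rightarrow> (nat \<Rightarrow> 'x set) \<Rightarrow> (nat \<Rightarrow> 'x \<Rightarrow> 'd::finite cmat) \<Rightarrow> int" where
  "chi_comp n X A =
     Max {aff_dim S0 + 1 | S0. S0 \<subseteq> density_ops \<and> S0_compatible S0 n X A}"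

definition post_process ::
  "nat \<Rightarrow> (nat \<Rightarrow> 'x set) \<Rightarrow> (nat \<Rightarrow> 'y \<Rightarrow> 'x \<Rightarrow> real) \<Rightarrow> (nat \<Rightarrow> 'x \<Rightarrow> 'd::finite cmat)
     \<Rightarrow> nat \<Rightarrow> 'y \<Rightarrow> 'd cmat" where
  "post_process n X \<nu> A j y = (\<Sum>x\<in>X j. \<nu> j y x *\<^sub>R A j x)"

definition stochastic :: "'y set \<Rightarrow> 'x set \<Rightarrow> ('y \<Rightarrow> 'x \<Rightarrow> real) \<Rightarrow> bool" where
  "stochastic Y X \<nu> \<longleftrightarrow> (\<forall>y\<in>Y. \<forall>x\<in>X. 0 \<le> \<nu> y x) \<and> (\<forall>x\<in>X. (\<Sum>y\<in>Y. \<nu> y x) = 1)"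

end

theory Submission imports Defs begin

lemma quad_form_add: "quad_form (A + B) v = quad_form A v + quad_form B v"
  unfolding quad_form_def by (simp add: matrix_vector_mult_add_rdistrib distrib_left sum.distrib)
lemma quad_form_zero: "quad_form 0 v = 0"
  unfolding quad_form_def by simp
lemma quad_form_scaleR: "quad_form (c *\<^sub>R A) v = of_real c * quad_form A v"
  unfolding quad_form_def matrix_vector_mult_def
  apply (simp only: vec_lambda_beta vector_scaleR_component sum_distrib_left)
  apply (intro sum.cong refl)
  apply (simp only: scaleR_conv_of_real mult_ac)
  done
lemma quad_form_sum: "quad_form (sum f S) v = (\<Sum>i\<in>S. quad_form (f i) v)"
  by (induction S rule: infinite_finite_induct) (auto simp: quad_form_zero quad_form_add)

lemma psd_comb:
  assumes "\<And>i. i \<in> S \<Longrightarrow> psd (f i)" "\<And>i. i \<in> S \<Longrightarrow> c i \<ge> 0"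
  shows "psd (\<Sum>i\<in>S. c i *\<^sub>R f i)"
  unfolding psd_def
proof
  fix v
  have eq: "of_real (c i) * quad_form (f i) v = of_real (c i * Re (quad_form (f i) v))" if i: "i \<in> S" for i
  proof -
    have "Im (quad_form (f i) v) = 0" using assms(1)[OF i] unfolding psd_def by blast
    then have "quad_form (f i) v = of_real (Re (quad_form (f i) v))"
      by (simp add: complex_eq_iff)
    then show ?thesis by (metis of_real_mult)
  qed
  have "quad_form (\<Sum>i\<in>S. c i *\<^sub>R f i) v = (\<Sum>i\<in>S. of_real (c i * Re (quad_form (f i) v)))"
    unfolding quad_form_sum quad_form_scaleR by (rule sum.cong[OF refl eq])
  moreover have "0 \<le> (\<Sum>i\<in>S. c i * Re (quad_form (f i) v))"
    using assms unfolding psd_def by (intro sum_nonneg mult_nonneg_nonneg) auto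
  ultimately show "Im (quad_form (\<Sum>i\<in>S. c i *\<^sub>R f i) v) = 0 \<and> 0 \<le> Re (quad_form (\<Sum>i\<in>S. c i *\<^sub>R f i) v)"
    by (simp add: Im_sum Re_sum)
qed

lemma mtrace_add: "mtrace (A + B) = mtrace A + mtrace B"
  unfolding mtrace_def by (simp add: sum.distrib)
lemma mtrace_scaleR: "mtrace (c *\<^sub>R A) = of_real c * mtrace A"
  unfolding mtrace_def by (simp only: vector_scaleR_component scaleR_sum_right[symmetric]) (simp add: scaleR_conv_of_real)
lemma mtrace_comb: "mtrace (\<rho> ** (\<Sum>i\<in>S. c i *\<^sub>R f i)) = (\<Sum>i\<in>S. of_real (c i) * mtrace (\<rho> ** f i))"
proof (induction S rule: infinite_finite_induct)
  case (insert x F)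
  then show ?case
    by (simp add: matrix_add_ldistrib mtrace_add mtrace_scaleR matrix_scalar_ac scalar_matrix_assoc[symmetric])
qed (auto simp: mtrace_def)

lemma psd_0: "psd 0" unfolding psd_def by (simp add: quad_form_zero)
lemma psd_1: "psd (mat 1)" unfolding psd_def quad_form_def
  by (simp add: mult.commute complex_mult_cnj sum_nonneg)

lemma mat1_nz: "(mat 1 :: 'd::finite cmat) \<noteq> 0"
proof
  assume "(mat 1 :: 'd::finite cmat) = 0"
  then have "(mat 1 :: 'd::finite cmat) $ undefined $ undefined = 0" by simp
  then show False by (simp add: mat_def)
qed

lemma povm_ne: "povm X (A :: 'x \<Rightarrow> 'd::finite cmat) \<Longrightarrow> X \<noteq> {}"
  using mat1_nz unfolding povm_def by force

lemma exists_compat: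
  fixes A :: "nat \<Rightarrow> 'x \<Rightarrow> 'd::finite cmat"
  assumes obs: "\<forall>j<n. povm (X j) (A j)"
  shows "S0_compatible {} n X A"
proof -
  define x0 where "x0 j = (SOME x. x \<in> X j)" for j
  have x0: "x0 j \<in> X j" if "j < n" for j
    using povm_ne[of "X j" "A j"] obs that unfolding x0_def by (meson ex_in_conv someI_ex)
  define g0 where "g0 = restrict x0 {..<n}"
  have g0: "g0 \<in> PiE {..<n} X" using x0 unfolding g0_def by auto
  define B :: "nat \<Rightarrow> 'x \<Rightarrow> 'd cmat" where "B j x = (if x = x0 j then mat 1 else 0)" for j x
  define G :: "(nat \<Rightarrow> 'x) \<Rightarrow> 'd cmat" where "G g = (if g = g0 then mat 1 else 0)" for g
  have fin: "finite (X j)" if "j < n" for j using obs that povm_def by blast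
  have "povm (X j) (B j)" if "j < n" for j
    using fin[OF that] x0[OF that] unfolding povm_def B_def by (auto simp: psd_0 psd_1)
  moreover have "compatible n X B"
    unfolding compatible_def
  proof (intro exI conjI allI impI ballI)
    have finP: "finite (PiE {..<n} X)" using fin by (intro finite_PiE) auto
      then show "povm (PiE {..<n} X) G"
      using g0 unfolding povm_def G_def by (auto simp: psd_0 psd_1 sum.delta)
    fix j x assume j: "j < n" and x: "x \<in> X j"
    have fin2: "finite {g \<in> PiE {..<n} X. g j = x}" by (rule finite_subset[OF _ finP]) auto
    show "B j x = (\<Sum>g\<in>{g \<in> PiE {..<n} X. g j = x}. G g)"
      unfolding G_def B_def sum.delta[OF fin2] using g0 j
      by (auto simp: g0_def)
  qed
  ultimately show ?thesis unfolding S0_compatible_def by blast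
qed

lemma setEq_PiE: fixes Y :: "nat \<Rightarrow> 'y set"
  assumes j: "j < n" and y: "y \<in> Y j"
  shows "{h \<in> PiE {..<n} Y. h j = y} = PiE {..<n} (\<lambda>k. if k = j then {y} else Y k)"
proof (intro set_eqI iffI)
  fix h assume "h \<in> {h \<in> PiE {..<n} Y. h j = y}"
  then show "h \<in> PiE {..<n} (\<lambda>k. if k = j then {y} else Y k)"
    by (simp add: PiE_iff)
next
  fix h assume h: "h \<in> PiE {..<n} (\<lambda>k. if k = j then {y} else Y k)"
  then have "h j = y" using j by (auto simp: PiE_iff dest: bspec[of _ _ j])
  moreover have "h \<in> PiE {..<n} Y" using h y unfolding PiE_iff by (metis singletonD)
  ultimately show "h \<in> {h \<in> PiE {..<n} Y. h j = y}" by simp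
qed

lemma post_compat:
  fixes A :: "nat \<Rightarrow> 'x \<Rightarrow> 'd::finite cmat" and \<nu> :: "nat \<Rightarrow> 'y \<Rightarrow> 'x \<Rightarrow> real"
  assumes obs: "\<forall>j<n. povm (X j) (A j)"
    and finY: "\<forall>j<n. finite (Y j)"
    and stoch: "\<forall>j<n. stochastic (Y j) (X j) (\<nu> j)"
    and comp: "S0_compatible S0 n X A"
  shows "S0_compatible S0 n Y (post_process n X \<nu> A)"
proof -
  obtain A' where A'p: "\<forall>j<n. povm (X j) (A' j)" and cA': "compatible n X A'"
    and agree: "\<forall>j<n. \<forall>x\<in>X j. \<forall>\<rho>\<in>S0. mtrace (\<rho> ** A' j x) = mtrace (\<rho> ** A j x)"
    using comp unfolding S0_compatible_def by blast
  obtain G where Gp: "povm (PiE {..<n} X) G"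
    and marg: "\<forall>j<n. \<forall>x\<in>X j. A' j x = (\<Sum>g\<in>{g\<in>PiE {..<n} X. g j = x}. G g)"
    using cA' unfolding compatible_def by blast
  have finX: "finite (X j)" if "j < n" for j using obs that povm_def by blast
  have nu0: "\<nu> j y x \<ge> 0" if "j < n" "y \<in> Y j" "x \<in> X j" for j y x
    using stoch that unfolding stochastic_def by blast
  have nu1: "(\<Sum>y\<in>Y j. \<nu> j y x) = 1" if "j < n" "x \<in> X j" for j x
    using stoch that unfolding stochastic_def by blast
  define B where "B j y = (\<Sum>x\<in>X j. \<nu> j y x *\<^sub>R A' j x)" for j y
  define H where "H h = (\<Sum>g\<in>PiE {..<n} X. (\<Prod>k<n. \<nu> k (h k) (g k)) *\<^sub>R G g)" for h
  have finPX: "finite (PiE {..<n} X)" using finX by (intro finite_PiE) auto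
  have finPY: "finite (PiE {..<n} Y)" using finY by (intro finite_PiE) auto
  have Bp: "povm (Y j) (B j)" if j: "j < n" for j
    unfolding povm_def
  proof (intro conjI ballI)
    show "finite (Y j)" using finY j by blast
    fix y assume "y \<in> Y j"
    then show "psd (B j y)" unfolding B_def
      using A'p j nu0 by (intro psd_comb) (auto simp: povm_def)
  next
    have "(\<Sum>y\<in>Y j. B j y) = (\<Sum>x\<in>X j. (\<Sum>y\<in>Y j. \<nu> j y x) *\<^sub>R A' j x)"
      unfolding B_def by (simp add: sum.swap[of _ "Y j"] scaleR_sum_left)
    also have "\<dots> = (\<Sum>x\<in>X j. A' j x)" using nu1 j by simp
    also have "\<dots> = mat 1" using A'p j povm_def by blast
    finally show "(\<Sum>y\<in>Y j. B j y) = mat 1" .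
  qed
  have prodsum: "(\<Sum>h\<in>PiE {..<n} Y'. \<Prod>k<n. \<nu> k (h k) (g k)) = (\<Prod>k<n. \<Sum>y\<in>Y' k. \<nu> k y (g k))"
    if "\<forall>k<n. finite (Y' k)" for Y' g
    using prod_sum_PiE[of "{..<n}" Y' "\<lambda>k y. \<nu> k y (g k)"] that by simp
  have cB: "compatible n Y B"
    unfolding compatible_def
  proof (intro exI conjI allI impI ballI)
    show "povm (PiE {..<n} Y) H"
      unfolding povm_def
    proof (intro conjI ballI)
      show "finite (PiE {..<n} Y)" by (rule finPY)
      fix h assume h: "h \<in> PiE {..<n} Y"
      show "psd (H h)" unfolding H_def
        using Gp h by (intro psd_comb) (auto simp: povm_def intro!: prod_nonneg nu0)
    next
      have "(\<Sum>h\<in>PiE {..<n} Y. H h) = (\<Sum>g\<in>PiE {..<n} X. (\<Sum>h\<in>PiE {..<n} Y. \<Prod>k<n. \<nu> k (h k) (g k)) *\<^sub>R G g)"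
        unfolding H_def by (simp add: sum.swap[of _ "PiE {..<n} Y"] scaleR_sum_left)
      also have "\<dots> = (\<Sum>g\<in>PiE {..<n} X. G g)"
      proof (intro sum.cong refl)
        fix g assume g: "g \<in> PiE {..<n} X"
        have "(\<Prod>k<n. \<Sum>y\<in>Y k. \<nu> k y (g k)) = 1"
          using g by (intro prod.neutral ballI) (auto simp: nu1 PiE_iff)
        then show "(\<Sum>h\<in>PiE {..<n} Y. \<Prod>k<n. \<nu> k (h k) (g k)) *\<^sub>R G g = G g"
          using finY by (simp add: prodsum)
      qed
      also have "\<dots> = mat 1" using Gp povm_def by blast
      finally show "(\<Sum>h\<in>PiE {..<n} Y. H h) = mat 1" .
    qed
    fix j y assume j: "j < n" and y: "y \<in> Y j"
    define Y' where "Y' = (\<lambda>k. if k = j then {y} else Y k)"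
    have setEq: "{h \<in> PiE {..<n} Y. h j = y} = PiE {..<n} Y'"
      unfolding Y'_def using setEq_PiE[where j=j and n=n and y=y and Y=Y] j y by simp
    have finY': "\<forall>k<n. finite (Y' k)" using finY unfolding Y'_def by auto
    have "(\<Sum>h\<in>{h \<in> PiE {..<n} Y. h j = y}. H h)
        = (\<Sum>g\<in>PiE {..<n} X. (\<Sum>h\<in>PiE {..<n} Y'. \<Prod>k<n. \<nu> k (h k) (g k)) *\<^sub>R G g)"
      unfolding setEq H_def by (simp add: sum.swap[of _ "PiE {..<n} Y'"] scaleR_sum_left)
    also have "\<dots> = (\<Sum>g\<in>PiE {..<n} X. \<nu> j y (g j) *\<^sub>R G g)"
    proof (intro sum.cong refl)
      fix g assume g: "g \<in> PiE {..<n} X"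
      have "(\<Prod>k<n. \<Sum>y\<in>Y' k. \<nu> k y (g k)) = (\<Prod>k<n. if k = j then \<nu> j y (g j) else 1)"
        using g by (intro prod.cong refl) (auto simp: Y'_def nu1 PiE_iff)
      also have "\<dots> = \<nu> j y (g j)" using j by (simp add: prod.delta)
      finally show "(\<Sum>h\<in>PiE {..<n} Y'. \<Prod>k<n. \<nu> k (h k) (g k)) *\<^sub>R G g = \<nu> j y (g j) *\<^sub>R G g"
        by (simp add: prodsum[OF finY'])
    qed
    also have "\<dots> = (\<Sum>x\<in>X j. \<Sum>g\<in>{g \<in> PiE {..<n} X. g j = x}. \<nu> j y (g j) *\<^sub>R G g)"
      using finPX finX[OF j] j by (intro sum.group[symmetric]) auto
    also have "\<dots> = B j y"
      unfolding B_def using marg j by (intro sum.cong refl) (simp add: scaleR_sum_right)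
    finally show "B j y = (\<Sum>h\<in>{h \<in> PiE {..<n} Y. h j = y}. H h)" by simp
  qed
  have ag: "mtrace (\<rho> ** B j y) = mtrace (\<rho> ** post_process n X \<nu> A j y)"
    if "j < n" "y \<in> Y j" "\<rho> \<in> S0" for j y \<rho>
    unfolding B_def post_process_def mtrace_comb using agree that by (intro sum.cong refl) simp
  show ?thesis unfolding S0_compatible_def
  proof (intro exI[of _ B] conjI)
    show "\<forall>j<n. povm (Y j) (B j)" using Bp by blast
    show "compatible n Y B" by (rule cB)
    show "\<forall>j<n. \<forall>x\<in>Y j. \<forall>\<rho>\<in>S0. mtrace (\<rho> ** B j x) = mtrace (\<rho> ** post_process n X \<nu> A j x)"
      using ag by blast
  qed
qed

theorem proposition4p2:
  fixes n :: nat
    and X :: "nat \<Rightarrow> 'x set" and Y :: "nat \<Rightarrow> 'y set"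
    and A :: "nat \<Rightarrow> 'x \<Rightarrow> 'd::finite cmat"
    and \<nu> :: "nat \<Rightarrow> 'y \<Rightarrow> 'x \<Rightarrow> real"
    and S0 :: "'d cmat set"
  assumes obs: "\<forall>j<n. povm (X j) (A j)"
    and finY: "\<forall>j<n. finite (Y j)"
    and stoch: "\<forall>j<n. stochastic (Y j) (X j) (\<nu> j)"
    and states: "S0 \<subseteq> density_ops"
    and incomp: "S0_incompatible S0 n Y (post_process n X \<nu> A)"
  shows "S0_incompatible S0 n X A
    \<and> chi_incomp n Y (post_process n X \<nu> A) \<ge> chi_incomp n X A
    \<and> chi_comp n Y (post_process n X \<nu> A) \<ge> chi_comp n X A"
proof -
  have pc: "S0_compatible S n Y (post_process n X \<nu> A)" if "S0_compatible S n X A" for S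
    using post_compat[OF obs finY stoch that] .
  have bnd: "aff_dim S + 1 \<in> {0..int DIM('d cmat) + 1}" for S :: "'d cmat set"
    using aff_dim_geq[of S] aff_dim_le_DIM[of S] by auto
  define IA where "IA = {aff_dim S + 1 | S. S \<subseteq> (density_ops :: 'd cmat set) \<and> S0_incompatible S n X A}"
  define IP where "IP = {aff_dim S + 1 | S. S \<subseteq> (density_ops :: 'd cmat set) \<and> S0_incompatible S n Y (post_process n X \<nu> A)}"
  define CA where "CA = {aff_dim S + 1 | S. S \<subseteq> (density_ops :: 'd cmat set) \<and> S0_compatible S n X A}"
  define CP where "CP = {aff_dim S + 1 | S. S \<subseteq> (density_ops :: 'd cmat set) \<and> S0_compatible S n Y (post_process n X \<nu> A)}"
  have fin: "finite M" if "M \<subseteq> {aff_dim S + 1 | S. S \<subseteq> (density_ops :: 'd cmat set)}" for M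
    by (rule finite_subset[of _ "{0..int DIM('d cmat) + 1}"]) (use that bnd in auto)
  have "IP \<subseteq> IA" unfolding IP_def IA_def using pc by blast
  moreover have "IP \<noteq> {}" unfolding IP_def using states incomp by blast
  moreover have "finite IA" unfolding IA_def by (rule fin) blast
  ultimately have 2: "Min IA \<le> Min IP" by (rule Min_antimono)
  have "CA \<subseteq> CP" unfolding CP_def CA_def using pc by blast
  moreover have "CA \<noteq> {}" unfolding CA_def using exists_compat[OF obs] by blast
  moreover have "finite CP" unfolding CP_def by (rule fin) blast
  ultimately have 3: "Max CA \<le> Max CP" by (rule Max_mono)
  show ?thesis
    using pc incomp 2 3 unfolding chi_incomp_def chi_comp_def IA_def IP_def CA_def CP_def by blast
qed

end
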